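(* Let $M\ge1$, $\ell\ge1$, $1\le m\le\ell$, and let $\lambda_1,\dots,\lambda_m$ be positive integers with $\lambda_1+\dots+\lambda_m=\ell$. For $k=(k_1,\dots,k_\ell)\in\mathbb{Z}^\ell$ define the block sums $K_j=\sum_{l=\lambda_1+\dots+\lambda_{j-1}+1}^{\lambda_1+\dots+\lambda_j}k_l$ for $j=1,\dots,m$. Let $\epsilon_1,\dots,\epsilon_m\in\{\pm1\}$ with $\prod_{j=1}^m\epsilon_j=-1$. Let $\mathcal N$ be the number of $(n_1,\dots,n_m)\in\mathbb{Z}^m$ with $-M\le n_j\le M$ for all $j$ and $n_j-\epsilon_{j-1}n_{j-1}=-K_j$ for $j=1,\dots,m$, where indices are taken cyclically modulo $m$ (so $n_0=n_m$, $\epsilon_0=\epsilon_m$). Then $\mathcal N\in\{0,1\}$. Moreover, if $\sum_{l=1}^\ell k_l$ is odd then $\mathcal N=0$, and if $\sum_{l=1}^\ell k_l$ is even and $\sum_{l=1}^\ell|k_l|\le 2M$ then $\mathcal N=1$. *)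

theory Defs
  imports Main
begin

definition block_end :: "(nat \<Rightarrow> nat) \<Rightarrow> nat \<Rightarrow> nat" where
  "block_end lam j = (\<Sum>i=1..j. lam i)"

definition block_sum :: "(nat \<Rightarrow> nat) \<Rightarrow> (nat \<Rightarrow> int) \<Rightarrow> nat \<Rightarrow> int" where
  "block_sum lam k j = (\<Sum>l = block_end lam (j - 1) + 1 .. block_end lam j. k l)"

definition cyc_prev :: "nat \<Rightarrow> nat \<Rightarrow> nat" where
  "cyc_prev m j = (if j = 1 then m else j - 1)"

definition sol_set :: "int \<Rightarrow> nat \<Rightarrow> (nat \<Rightarrow> nat) \<Rightarrow> (nat \<Rightarrow> int) \<Rightarrow> (nat \<Rightarrow> int) \<Rightarrow> (nat \<Rightarrow> int) set" where
  "sol_set M m lam eps k =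
     {n. (\<forall>j. j \<notin> {1..m} \<longrightarrow> n j = 0) \<and>
         (\<forall>j\<in>{1..m}. - M \<le> n j \<and> n j \<le> M \<and>
             n j - eps (cyc_prev m j) * n (cyc_prev m j) = - block_sum lam k j)}"

end

theory Submission imports Defs begin

lemma block_tele:
  "(\<Sum>j=1..m. (\<Sum>l = block_end lam (j - 1) + 1 .. block_end lam j. f l)) = (\<Sum>l=1..block_end lam m. (f l :: int))"
proof (induction m)
  case 0
  then show ?case by (simp add: block_end_def)
next
  case (Suc m)
  have be: "block_end lam (Suc m) = block_end lam m + lam (Suc m)"
    by (simp add: block_end_def)
  have "(\<Sum>l=1..block_end lam m + lam (Suc m). f l) = (\<Sum>l=1..block_end lam m. f l) + (\<Sum>l=block_end lam m + 1..block_end lam m + lam (Suc m). f l)"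
    by (rule sum.ub_add_nat) simp
  then show ?case using Suc by (simp add: be)
qed

lemma cyc_sum:
  assumes "1 \<le> m"
  shows "(\<Sum>j=1..m. (n::nat\<Rightarrow>int) (cyc_prev m j)) = (\<Sum>j=1..m. n j)"
proof -
  obtain p where p: "m = Suc p" using assms by (cases m) auto
  have "(\<Sum>j=1..m. n (cyc_prev m j)) = n m + (\<Sum>j=Suc 1..Suc p. n (cyc_prev m j))"
    using p by (simp add: sum.atLeast_Suc_atMost cyc_prev_def)
  also have "(\<Sum>j=Suc 1..Suc p. n (cyc_prev m j)) = (\<Sum>i=1..p. n i)"
    by (subst sum.shift_bounds_cl_Suc_ivl) (simp add: cyc_prev_def)
  finally show ?thesis using p by (cases p) (auto simp: sum.atLeast_Suc_atMost add.commute)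
qed


theorem lemma4:
  fixes M :: int and ell m :: nat and lam :: "nat \<Rightarrow> nat"
    and eps :: "nat \<Rightarrow> int" and k :: "nat \<Rightarrow> int"
  assumes "M \<ge> 1" and "ell \<ge> 1" and "1 \<le> m" and "m \<le> ell"
    and "\<forall>j\<in>{1..m}. lam j > 0"
    and "(\<Sum>j=1..m. lam j) = ell"
    and "\<forall>j\<in>{1..m}. eps j = 1 \<or> eps j = -1"
    and "(\<Prod>j=1..m. eps j) = -1"
  shows "card (sol_set M m lam eps k) \<in> {0, 1} \<and>
         (odd (\<Sum>l=1..ell. k l) \<longrightarrow> card (sol_set M m lam eps k) = 0) \<and>
         (even (\<Sum>l=1..ell. k l) \<and> (\<Sum>l=1..ell. \<bar>k l\<bar>) \<le> 2 * M
            \<longrightarrow> card (sol_set M m lam eps k) = 1)"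
proof -
  let ?S = "sol_set M m lam eps k"
  define K where "K = block_sum lam k"
  define s where "s j = (\<Prod>i=1..<j. eps i)" for j
  have be: "block_end lam m = ell" using assms(6) by (simp add: block_end_def)
  have sumK: "(\<Sum>j=1..m. K j) = (\<Sum>l=1..ell. k l)"
    using block_tele[where m=m and lam=lam and f=k] be by (simp add: K_def block_sum_def)
  have sumKabs: "(\<Sum>j=1..m. \<bar>K j\<bar>) \<le> (\<Sum>l=1..ell. \<bar>k l\<bar>)"
  proof -
    have "(\<Sum>j=1..m. \<bar>K j\<bar>) \<le> (\<Sum>j=1..m. (\<Sum>l = block_end lam (j - 1) + 1 .. block_end lam j. \<bar>k l\<bar>))"
      unfolding K_def block_sum_def by (rule sum_mono) (rule sum_abs)
    also have "\<dots> = (\<Sum>l=1..ell. \<bar>k l\<bar>)" using block_tele[where m=m and lam=lam and f="\<lambda>l. \<bar>k l\<bar>"] be by simp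
    finally show ?thesis .
  qed
  have s1: "s 1 = 1" by (simp add: s_def)
  have sSuc: "s (Suc j) = eps j * s j" if "1 \<le> j" for j
    using that by (simp add: s_def prod.atLeastLessThan_Suc mult.commute)
  have sabs: "\<bar>s j\<bar> = 1" if "j \<le> Suc m" for j
    using that
  proof (induction j)
    case 0 then show ?case by (simp add: s_def)
  next
    case (Suc j)
    show ?case
    proof (cases "j = 0")
      case True then show ?thesis by (simp add: s_def)
    next
      case False
      then have "s (Suc j) = eps j * s j" using sSuc by simp
      moreover have "j \<in> {1..m}" using Suc.prems False by auto
      then have "eps j = 1 \<or> eps j = -1" using assms(7) by blast
      then have "\<bar>eps j\<bar> = 1" by auto
      ultimately show ?thesis using Suc by (simp add: abs_mult)
    qed
  qed
  have ssq: "s j * s j = 1" if "j \<le> Suc m" for j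
    using sabs[OF that] by (metis abs_mult_self_eq mult.right_neutral)
  have smlast: "eps m * s m = -1"
    using sSuc[OF assms(3)] assms(8) by (simp add: s_def atLeastLessThanSuc_atLeastAtMost)
  have eqs: "n j - eps (cyc_prev m j) * n (cyc_prev m j) = - K j"
    if "n \<in> ?S" "j \<in> {1..m}" for n j
    using that by (simp add: sol_set_def K_def)
  have zero: "n j = 0" if "n \<in> ?S" "j \<notin> {1..m}" for n j
    using that by (simp add: sol_set_def)
  have uniq: "a = b" if "a \<in> ?S" "b \<in> ?S" for a b
  proof -
    define d where "d j = a j - b j" for j
    have dstep: "d j = eps (j - 1) * d (j - 1)" if "j \<in> {2..m}" for j
    proof -
      have "cyc_prev m j = j - 1" using that by (simp add: cyc_prev_def)
      then show ?thesis using eqs[OF \<open>a \<in> ?S\<close>, of j] eqs[OF \<open>b \<in> ?S\<close>, of j] that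
        by (simp add: d_def algebra_simps)
    qed
    have d1: "d 1 = eps m * d m"
      using eqs[OF \<open>a \<in> ?S\<close>, of 1] eqs[OF \<open>b \<in> ?S\<close>, of 1] assms(3)
      by (simp add: d_def cyc_prev_def algebra_simps)
    have dall: "d j = s j * d 1" if "1 \<le> j" "j \<le> m" for j
      using that
    proof (induction j rule: dec_induct)
      case base then show ?case using s1 by simp
    next
      case (step i)
      have "d (Suc i) = eps i * d i" using dstep[of "Suc i"] step by simp
      then show ?case using step sSuc[OF step(1)] by simp
    qed
    have "d m = s m * d 1" using dall[of m] assms(3) by simp
    then have "d 1 = (eps m * s m) * d 1" using d1 by (simp add: mult.assoc)
    then have "d 1 = - d 1" using smlast by simp
    then have "d 1 = 0" by simp
    then have "d j = 0" if "j \<in> {1..m}" for j using dall[of j] that by simp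
    then show ?thesis
      using zero[OF \<open>a \<in> ?S\<close>] zero[OF \<open>b \<in> ?S\<close>] by (intro ext) (metis d_def eq_iff_diff_eq_0)
  qed
  have card01: "?S = {} \<or> (\<exists>a. ?S = {a})" using uniq by blast
  have par: "even (\<Sum>l=1..ell. k l)" if "n \<in> ?S" for n
  proof -
    have "(\<Sum>j=1..m. - K j) = (\<Sum>j=1..m. (n j - n (cyc_prev m j)) + (1 - eps (cyc_prev m j)) * n (cyc_prev m j))"
      by (intro sum.cong refl) (simp add: eqs[OF that, symmetric] algebra_simps)
    also have "\<dots> = (\<Sum>j=1..m. (1 - eps (cyc_prev m j)) * n (cyc_prev m j))"
      using cyc_sum[OF assms(3), of n] by (simp add: sum.distrib sum_subtractf)
    finally have e: "(\<Sum>j=1..m. - K j) = (\<Sum>j=1..m. (1 - eps (cyc_prev m j)) * n (cyc_prev m j))" .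
    have "even (\<Sum>j=1..m. (1 - eps (cyc_prev m j)) * n (cyc_prev m j))"
    proof (rule dvd_sum)
      fix j assume "j \<in> {1..m}"
      then have "cyc_prev m j \<in> {1..m}" by (auto simp: cyc_prev_def)
      then have "eps (cyc_prev m j) = 1 \<or> eps (cyc_prev m j) = -1" using assms(7) by blast
      then show "even ((1 - eps (cyc_prev m j)) * n (cyc_prev m j))" by auto
    qed
    then have "even (\<Sum>j=1..m. - K j)" using e by simp
    then show ?thesis using sumK by (simp add: sum_negf)
  qed
  have exist: "?S \<noteq> {}" if ev: "even (\<Sum>l=1..ell. k l)" and bd: "(\<Sum>l=1..ell. \<bar>k l\<bar>) \<le> 2 * M"
  proof -
    define A where "A j = (\<Sum>i=1..j. s i * K i)" for j
    define T where "T = A m"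
    have Teven: "even T"
    proof -
      have "T = (\<Sum>j=1..m. K j) + (\<Sum>j=1..m. (s j - 1) * K j)"
        by (simp add: T_def A_def sum.distrib[symmetric] algebra_simps)
      moreover have "even (\<Sum>j=1..m. (s j - 1) * K j)"
      proof (rule dvd_sum)
        fix j assume "j \<in> {1..m}"
        then have "\<bar>s j\<bar> = 1" using sabs by simp
        then have "s j = 1 \<or> s j = -1" by auto
        then show "even ((s j - 1) * K j)" by auto
      qed
      ultimately show ?thesis using ev sumK by simp
    qed
    define n0 where "n0 j = (if j \<in> {1..m} then s j * (T div 2 - A j) else 0)" for j
    have "n0 \<in> ?S"
      unfolding sol_set_def
    proof (intro CollectI conjI allI impI ballI)
      fix j assume "j \<notin> {1..m}" then show "n0 j = 0" unfolding n0_def by auto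
    next
      fix j assume j: "j \<in> {1..m}"
      have "\<bar>n0 j\<bar> \<le> M"
      proof -
        have "\<bar>n0 j\<bar> = \<bar>T div 2 - A j\<bar>" using j sabs[of j] by (simp add: n0_def abs_mult)
        moreover have "2 * (T div 2 - A j) = T - 2 * A j" using Teven by simp
        moreover have "\<bar>T - 2 * A j\<bar> \<le> 2 * M"
        proof -
          obtain p where p: "m = j + p" using j by (intro that[of "m - j"]) auto
          have Tsplit: "T = A j + (\<Sum>i=j+1..j+p. s i * K i)"
            unfolding T_def A_def p by (rule sum.ub_add_nat) (use j in simp)
          have "\<bar>T - 2 * A j\<bar> = \<bar>(\<Sum>i=j+1..j+p. s i * K i) - A j\<bar>" using Tsplit by simp
          also have "\<dots> \<le> \<bar>\<Sum>i=j+1..j+p. s i * K i\<bar> + \<bar>A j\<bar>" by (rule abs_triangle_ineq4)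
          also have "\<dots> \<le> (\<Sum>i=j+1..j+p. \<bar>s i * K i\<bar>) + (\<Sum>i=1..j. \<bar>s i * K i\<bar>)"
            unfolding A_def by (intro add_mono sum_abs)
          also have "\<dots> = (\<Sum>i=1..j+p. \<bar>s i * K i\<bar>)"
            by (subst sum.ub_add_nat[of 1 j]) (use j in auto)
          also have "\<dots> = (\<Sum>i=1..m. \<bar>K i\<bar>)"
            using p sabs by (intro sum.cong refl) (auto simp: abs_mult)
          also have "\<dots> \<le> 2 * M" using sumKabs bd by simp
          finally show ?thesis .
        qed
        ultimately show ?thesis by linarith
      qed
      then show "- M \<le> n0 j" "n0 j \<le> M" by auto
      show "n0 j - eps (cyc_prev m j) * n0 (cyc_prev m j) = - block_sum lam k j"
      proof (cases "j = 1")
        case True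
        have "n0 1 = T div 2 - K 1" using assms(3) s1 by (simp add: n0_def A_def)
        moreover have "eps m * n0 m = - (T div 2 - T)" using assms(3) smlast
          by (simp add: n0_def T_def mult.assoc[symmetric])
        moreover have "2 * (T div 2) = T" using Teven by simp
        ultimately show ?thesis using True by (simp add: cyc_prev_def K_def)
      next
        case False
        then obtain i where i: "j = Suc i" "1 \<le> i" "i < m" using j
          by (intro that[of "j - 1"]) auto
        have Aj: "A j = A i + s j * K j" using i by (simp add: A_def)
        have "n0 j - eps i * n0 i = s j * (T div 2 - A j) - s j * (T div 2 - A i)"
          using i j sSuc[of i] by (simp add: n0_def)
        also have "\<dots> = - (s j * s j) * K j" by (simp add: Aj algebra_simps)
        also have "\<dots> = - K j" using ssq[of j] i by simp
        finally show ?thesis using i by (simp add: cyc_prev_def K_def)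
      qed
    qed
    then show ?thesis by blast
  qed
  show ?thesis
  proof (intro conjI impI)
    show "card ?S \<in> {0, 1}" using card01 by auto
  next
    assume "odd (\<Sum>l=1..ell. k l)"
    then have "?S = {}" using par by blast
    then show "card ?S = 0" by simp
  next
    assume h: "even (\<Sum>l=1..ell. k l) \<and> (\<Sum>l=1..ell. \<bar>k l\<bar>) \<le> 2 * M"
    then show "card ?S = 1" using exist card01 by fastforce
  qed
qed

end
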